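(* If \(G\) admits a centroid map, then it has property RD.
   Context: \(G\) is a finitely generated group with a word-length \(\ell\), \(B_{G}(r)=\{g:\ell(g)\leq r\}\). \(G\) acts by isometries on a metric space \((X,d)\) with uniformly bounded stabilizers. A centroid map is a map \(m\colon G^{2}\to X\) such that for some polynomial \(P\): (1) \(\lvert m(B_{G}(r)\times\{h\})\rvert\leq P(r)\) for all \(h\in G\); (2) \(\lvert m(\{g\}\times G)\rvert\leq P(r)\) for all \(g\in B_{G}(r)\); (3) \(\lvert\{g^{-1}m(g,gh):g\in B_{G}(r)\}\rvert\leq P(r)\) for all \(h\in G\). Property RD means there is a polynomial \(Q\) with \(\lVert f\rVert_{op}\leq Q(\ell(f))\lVert f\rVert_{2}\) for all \(f\in\mathbb{C}[G]\), where \(\ell(f)=\max\{\ell(x):f(x)\neq0\}\), \(\lVert f\rVert_{2}\) is the \(\ell^{2}\)-norm and \(\lVert f\rVert_{op}\) the operator norm of convolution by \(f\) on \(\ell^{2}(G)\). *)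

theory Defs
  imports "HOL-Analysis.Analysis" "HOL-Algebra.Group" "HOL-Algebra.Generated_Groups"
          "HOL-Computational_Algebra.Polynomial"
begin

definition word_length :: "('g, 'b) monoid_scheme \<Rightarrow> 'g set \<Rightarrow> 'g \<Rightarrow> nat" where
  "word_length G S g =
     (LEAST n. \<exists>ws. length ws = n \<and> set ws \<subseteq> S \<union> (\<lambda>s. inv\<^bsub>G\<^esub> s) ` S
                   \<and> foldr (\<lambda>a b. a \<otimes>\<^bsub>G\<^esub> b) ws \<one>\<^bsub>G\<^esub> = g)"

definition ball_G :: "('g, 'b) monoid_scheme \<Rightarrow> 'g set \<Rightarrow> nat \<Rightarrow> 'g set" where
  "ball_G G S r = {g \<in> carrier G. word_length G S g \<le> r}"

definition isometric_action :: "('g, 'b) monoid_scheme \<Rightarrow> ('g \<Rightarrow> 'x::metric_space \<Rightarrow> 'x) \<Rightarrow> bool" where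
  "isometric_action G act \<longleftrightarrow>
     (\<forall>x. act \<one>\<^bsub>G\<^esub> x = x) \<and>
     (\<forall>g\<in>carrier G. \<forall>h\<in>carrier G. \<forall>x. act (g \<otimes>\<^bsub>G\<^esub> h) x = act g (act h x)) \<and>
     (\<forall>g\<in>carrier G. \<forall>x y. dist (act g x) (act g y) = dist x y)"

definition uniformly_bounded_stabilizers :: "('g, 'b) monoid_scheme \<Rightarrow> ('g \<Rightarrow> 'x \<Rightarrow> 'x) \<Rightarrow> bool" where
  "uniformly_bounded_stabilizers G act \<longleftrightarrow>
     (\<exists>C::nat. \<forall>x. finite {g \<in> carrier G. act g x = x} \<and> card {g \<in> carrier G. act g x = x} \<le> C)"

definition card_le :: "'a set \<Rightarrow> real \<Rightarrow> bool" where
  "card_le A b \<longleftrightarrow> finite A \<and> real (card A) \<le> b"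

definition centroid_map :: "('g, 'b) monoid_scheme \<Rightarrow> 'g set \<Rightarrow> ('g \<Rightarrow> 'x \<Rightarrow> 'x) \<Rightarrow> ('g \<Rightarrow> 'g \<Rightarrow> 'x) \<Rightarrow> bool" where
  "centroid_map G S act m \<longleftrightarrow>
     (\<exists>P :: real poly.
        (\<forall>r::nat. \<forall>h\<in>carrier G. card_le ((\<lambda>g. m g h) ` ball_G G S r) (poly P (real r))) \<and>
        (\<forall>r::nat. \<forall>g\<in>ball_G G S r. card_le ((\<lambda>h. m g h) ` carrier G) (poly P (real r))) \<and>
        (\<forall>r::nat. \<forall>h\<in>carrier G.
           card_le ((\<lambda>g. act (inv\<^bsub>G\<^esub> g) (m g (g \<otimes>\<^bsub>G\<^esub> h))) ` ball_G G S r) (poly P (real r))))"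

definition group_algebra :: "('g, 'b) monoid_scheme \<Rightarrow> ('g \<Rightarrow> complex) set" where
  "group_algebra G = {f. finite {x. f x \<noteq> 0} \<and> {x. f x \<noteq> 0} \<subseteq> carrier G}"

definition length_fun :: "('g, 'b) monoid_scheme \<Rightarrow> 'g set \<Rightarrow> ('g \<Rightarrow> complex) \<Rightarrow> nat" where
  "length_fun G S f = (if {x. f x \<noteq> 0} = {} then 0 else Max (word_length G S ` {x. f x \<noteq> 0}))"

definition l2 :: "('g, 'b) monoid_scheme \<Rightarrow> ('g \<Rightarrow> complex) set" where
  "l2 G = {\<xi>. (\<lambda>x. (cmod (\<xi> x))\<^sup>2) summable_on carrier G}"

definition l2_norm :: "('g, 'b) monoid_scheme \<Rightarrow> ('g \<Rightarrow> complex) \<Rightarrow> real" where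
  "l2_norm G \<xi> = sqrt (infsum (\<lambda>x. (cmod (\<xi> x))\<^sup>2) (carrier G))"

definition convolution :: "('g, 'b) monoid_scheme \<Rightarrow> ('g \<Rightarrow> complex) \<Rightarrow> ('g \<Rightarrow> complex) \<Rightarrow> 'g \<Rightarrow> complex" where
  "convolution G f \<xi> x = (\<Sum>y\<in>{y. f y \<noteq> 0}. f y * \<xi> (inv\<^bsub>G\<^esub> y \<otimes>\<^bsub>G\<^esub> x))"

definition op_norm :: "('g, 'b) monoid_scheme \<Rightarrow> ('g \<Rightarrow> complex) \<Rightarrow> real" where
  "op_norm G f = Sup {l2_norm G (convolution G f \<xi>) | \<xi>. \<xi> \<in> l2 G \<and> l2_norm G \<xi> \<le> 1}"

definition property_RD :: "('g, 'b) monoid_scheme \<Rightarrow> 'g set \<Rightarrow> bool" where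
  "property_RD G S \<longleftrightarrow>
     (\<exists>Q :: real poly. \<forall>f\<in>group_algebra G.
        op_norm G f \<le> poly Q (real (length_fun G S f)) * l2_norm G f)"

end

theory Submission
  imports Defs
begin


lemma core:
  fixes a e b :: "'g \<Rightarrow> real" and mm :: "'g \<Rightarrow> 'g \<Rightarrow> 'x" and kk :: "'g \<Rightarrow> 'g \<Rightarrow> 'g"
  assumes fY: "finite Y" and fF: "finite F" and P0: "0 \<le> P" and M0: "0 \<le> M"
    and cA: "\<And>y. y\<in>Y \<Longrightarrow> real (card (mm y ` F)) \<le> P"
    and cE: "\<And>x. x\<in>F \<Longrightarrow> real (card ((\<lambda>y. mm y x) ` Y)) \<le> P"
    and cB: "\<And>c k. real (card {p\<in>Y\<times>F. mm (fst p) (snd p) = c \<and> kk (fst p) (snd p) = k}) \<le> M"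
  shows "(\<Sum>p\<in>Y\<times>F. \<bar>a (fst p)\<bar> * \<bar>e (snd p)\<bar> * \<bar>b (kk (fst p) (snd p))\<bar>)
     \<le> sqrt M * P * L2_set a Y * L2_set e F * L2_set b ((\<lambda>p. kk (fst p) (snd p)) ` (Y\<times>F))"
proof -
  define Z where "Z = Y \<times> F"
  define w where "w p = \<bar>a (fst p)\<bar> * \<bar>e (snd p)\<bar> * \<bar>b (kk (fst p) (snd p))\<bar>" for p
  define cm where "cm p = mm (fst p) (snd p)" for p
  define kp where "kp p = kk (fst p) (snd p)" for p
  define Cs where "Cs = cm ` Z"
  define T where "T c = {p\<in>Z. cm p = c}" for c
  define K' where "K' = kp ` Z"
  define Yc where "Yc c = {y\<in>Y. c \<in> mm y ` F}" for c
  define Fc where "Fc c = {x\<in>F. c \<in> (\<lambda>y. mm y x) ` Y}" for c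
  define Ac where "Ac c = (\<Sum>y\<in>Yc c. (a y)\<^sup>2)" for c
  define Ec where "Ec c = (\<Sum>x\<in>Fc c. (e x)\<^sup>2)" for c
  define Bt where "Bt = (\<Sum>k\<in>K'. (b k)\<^sup>2)"
  have fZ: "finite Z" using fY fF Z_def by simp
  have fCs: "finite Cs" using fZ Cs_def by simp
  have fK: "finite K'" using fZ K'_def by simp
  have fT: "finite (T c)" for c using fZ T_def by simp
  have Ac0: "Ac c \<ge> 0" for c unfolding Ac_def by (simp add: sum_nonneg)
  have Ec0: "Ec c \<ge> 0" for c unfolding Ec_def by (simp add: sum_nonneg)
  have Bt0: "Bt \<ge> 0" unfolding Bt_def by (simp add: sum_nonneg)
  have S1: "(\<Sum>p\<in>Z. w p) = (\<Sum>c\<in>Cs. \<Sum>p\<in>T c. w p)"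
    unfolding T_def using sum.group[OF fZ fCs, of cm w] Cs_def by simp
  have step: "(\<Sum>p\<in>T c. w p) \<le> sqrt (Ac c) * sqrt (Ec c) * sqrt (M * Bt)" for c
  proof -
    have "(\<Sum>p\<in>T c. w p) = (\<Sum>p\<in>T c. \<bar>\<bar>a (fst p)\<bar> * \<bar>e (snd p)\<bar>\<bar> * \<bar>b (kp p)\<bar>)"
      unfolding w_def kp_def by (simp add: abs_mult)
    also have "\<dots> \<le> L2_set (\<lambda>p. \<bar>a (fst p)\<bar> * \<bar>e (snd p)\<bar>) (T c) * L2_set (\<lambda>p. b (kp p)) (T c)"
      by (rule L2_set_mult_ineq)
    also have "\<dots> \<le> sqrt (Ac c * Ec c) * sqrt (M * Bt)"
    proof (rule mult_mono)
      have sub: "T c \<subseteq> Yc c \<times> Fc c" unfolding T_def Yc_def Fc_def Z_def cm_def by force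
      have "(\<Sum>p\<in>T c. (\<bar>a (fst p)\<bar> * \<bar>e (snd p)\<bar>)\<^sup>2) \<le> (\<Sum>p\<in>Yc c \<times> Fc c. (\<bar>a (fst p)\<bar> * \<bar>e (snd p)\<bar>)\<^sup>2)"
        by (rule sum_mono2) (use sub fY fF Yc_def Fc_def in auto)
      also have "\<dots> = Ac c * Ec c"
        unfolding Ac_def Ec_def sum_product sum.cartesian_product
        by (simp add: power_mult_distrib case_prod_beta)
      finally show "L2_set (\<lambda>p. \<bar>a (fst p)\<bar> * \<bar>e (snd p)\<bar>) (T c) \<le> sqrt (Ac c * Ec c)"
        unfolding L2_set_def by simp
      have "(\<Sum>p\<in>T c. (b (kp p))\<^sup>2) = (\<Sum>k\<in>K'. \<Sum>p\<in>{p\<in>T c. kp p = k}. (b (kp p))\<^sup>2)"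
        by (rule sum.group[symmetric]) (use fT fK K'_def T_def in auto)
      also have "\<dots> = (\<Sum>k\<in>K'. (b k)\<^sup>2 * real (card {p\<in>T c. kp p = k}))"
        by (rule sum.cong) auto
      also have "\<dots> \<le> (\<Sum>k\<in>K'. (b k)\<^sup>2 * M)"
      proof (rule sum_mono)
        fix k
        have "{p\<in>T c. kp p = k} = {p\<in>Y\<times>F. mm (fst p) (snd p) = c \<and> kk (fst p) (snd p) = k}"
          unfolding T_def Z_def cm_def kp_def by auto
        then show "(b k)\<^sup>2 * real (card {p\<in>T c. kp p = k}) \<le> (b k)\<^sup>2 * M"
          using cB[of c k] by (simp add: mult_left_mono)
      qed
      also have "\<dots> = M * Bt" unfolding Bt_def by (simp add: sum_distrib_left mult.commute)
      finally show "L2_set (\<lambda>p. b (kp p)) (T c) \<le> sqrt (M * Bt)"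
        unfolding L2_set_def by simp
    qed (auto simp: L2_set_def Ac0 Ec0 sum_nonneg)
    finally show ?thesis by (simp add: real_sqrt_mult)
  qed
  have sumA: "(\<Sum>c\<in>Cs. Ac c) \<le> P * (\<Sum>y\<in>Y. (a y)\<^sup>2)"
  proof -
    have "(\<Sum>c\<in>Cs. Ac c) = (\<Sum>y\<in>Y. \<Sum>c\<in>{c\<in>Cs. c \<in> mm y ` F}. (a y)\<^sup>2)"
      unfolding Ac_def Yc_def by (rule sum.swap_restrict[OF fCs fY])
    also have "\<dots> \<le> (\<Sum>y\<in>Y. P * (a y)\<^sup>2)"
    proof (rule sum_mono)
      fix y assume y: "y \<in> Y"
      have "card {c\<in>Cs. c \<in> mm y ` F} \<le> card (mm y ` F)"
        by (rule card_mono) (use fF in auto)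
      then have "real (card {c\<in>Cs. c \<in> mm y ` F}) \<le> P" using cA[OF y] by linarith
      then show "(\<Sum>c\<in>{c\<in>Cs. c \<in> mm y ` F}. (a y)\<^sup>2) \<le> P * (a y)\<^sup>2"
        by (simp add: mult_right_mono)
    qed
    finally show ?thesis by (simp add: sum_distrib_left)
  qed
  have sumE: "(\<Sum>c\<in>Cs. Ec c) \<le> P * (\<Sum>x\<in>F. (e x)\<^sup>2)"
  proof -
    have "(\<Sum>c\<in>Cs. Ec c) = (\<Sum>x\<in>F. \<Sum>c\<in>{c\<in>Cs. c \<in> (\<lambda>y. mm y x) ` Y}. (e x)\<^sup>2)"
      unfolding Ec_def Fc_def by (rule sum.swap_restrict[OF fCs fF])
    also have "\<dots> \<le> (\<Sum>x\<in>F. P * (e x)\<^sup>2)"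
    proof (rule sum_mono)
      fix x assume x: "x \<in> F"
      have "card {c\<in>Cs. c \<in> (\<lambda>y. mm y x) ` Y} \<le> card ((\<lambda>y. mm y x) ` Y)"
        by (rule card_mono) (use fY in auto)
      then have "real (card {c\<in>Cs. c \<in> (\<lambda>y. mm y x) ` Y}) \<le> P" using cE[OF x] by linarith
      then show "(\<Sum>c\<in>{c\<in>Cs. c \<in> (\<lambda>y. mm y x) ` Y}. (e x)\<^sup>2) \<le> P * (e x)\<^sup>2"
        by (simp add: mult_right_mono)
    qed
    finally show ?thesis by (simp add: sum_distrib_left)
  qed
  have "(\<Sum>p\<in>Z. w p) \<le> (\<Sum>c\<in>Cs. sqrt (Ac c) * sqrt (Ec c) * sqrt (M * Bt))"
    unfolding S1 by (rule sum_mono) (rule step)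
  also have "\<dots> = sqrt (M * Bt) * (\<Sum>c\<in>Cs. \<bar>sqrt (Ac c)\<bar> * \<bar>sqrt (Ec c)\<bar>)"
    using Ac0 Ec0 by (simp add: sum_distrib_left mult.commute mult.left_commute)
  also have "\<dots> \<le> sqrt (M * Bt) * (L2_set (\<lambda>c. sqrt (Ac c)) Cs * L2_set (\<lambda>c. sqrt (Ec c)) Cs)"
    by (rule mult_left_mono[OF L2_set_mult_ineq]) (use M0 Bt0 in simp)
  also have "L2_set (\<lambda>c. sqrt (Ac c)) Cs = sqrt (\<Sum>c\<in>Cs. Ac c)"
    unfolding L2_set_def using Ac0 by simp
  also have "L2_set (\<lambda>c. sqrt (Ec c)) Cs = sqrt (\<Sum>c\<in>Cs. Ec c)"
    unfolding L2_set_def using Ec0 by simp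
  also have "sqrt (M * Bt) * (sqrt (\<Sum>c\<in>Cs. Ac c) * sqrt (\<Sum>c\<in>Cs. Ec c))
      \<le> sqrt (M * Bt) * (sqrt (P * (\<Sum>y\<in>Y. (a y)\<^sup>2)) * sqrt (P * (\<Sum>x\<in>F. (e x)\<^sup>2)))"
    by (intro mult_left_mono mult_mono real_sqrt_le_mono sumA sumE) (auto simp: M0 Bt0 P0 Ac0 Ec0 sum_nonneg)
  also have "\<dots> = sqrt M * P * L2_set a Y * L2_set e F * L2_set b K'"
    unfolding L2_set_def Bt_def using P0
    by (simp add: real_sqrt_mult real_sqrt_mult_self mult_ac)
  finally show ?thesis unfolding Z_def w_def K'_def kp_def .
qed



lemma fibre_card:
  fixes G :: "('g, 'b) monoid_scheme" (structure) and act :: "'g \<Rightarrow> 'x \<Rightarrow> 'x" and m :: "'g \<Rightarrow> 'g \<Rightarrow> 'x"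
  assumes grp: "group G" and act1: "\<And>x. act \<one>\<^bsub>G\<^esub> x = x"
    and actm: "\<And>g h x. g \<in> carrier G \<Longrightarrow> h \<in> carrier G \<Longrightarrow> act (g \<otimes>\<^bsub>G\<^esub> h) x = act g (act h x)"
    and stab: "\<And>x. finite {g \<in> carrier G. act g x = x} \<and> card {g \<in> carrier G. act g x = x} \<le> Cst"
    and Ysub: "Y \<subseteq> carrier G" and Fsub: "F \<subseteq> carrier G" and fY: "finite Y" and k: "k \<in> carrier G"
    and fD: "finite D" and hD: "\<And>y. y \<in> Y \<Longrightarrow> act (inv\<^bsub>G\<^esub> y) (m y (y \<otimes>\<^bsub>G\<^esub> k)) \<in> D"
  shows "card {p\<in>Y\<times>F. m (fst p) (snd p) = c \<and> inv\<^bsub>G\<^esub> (fst p) \<otimes>\<^bsub>G\<^esub> snd p = k} \<le> Cst * card D"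
proof -
  interpret group G by (rule grp)
  define W where "W = {p\<in>Y\<times>F. m (fst p) (snd p) = c \<and> inv (fst p) \<otimes> snd p = k}"
  define V where "V = {y\<in>Y. m y (y \<otimes> k) = c}"
  define Fb where "Fb d = {y\<in>carrier G. act (inv y) c = d}" for d
  have fV: "finite V" using fY V_def by simp
  have "W \<subseteq> (\<lambda>y. (y, y \<otimes> k)) ` V"
  proof
    fix p assume p: "p \<in> W"
    obtain y x where pyx: "p = (y, x)" by (cases p)
    have y: "y \<in> carrier G" and x: "x \<in> F" and eq: "inv y \<otimes> x = k" and mc: "m y x = c"
      and yY: "y \<in> Y"
      using p Ysub unfolding W_def pyx by auto
    have xc: "x \<in> carrier G" using x Fsub by auto
    have "y \<otimes> k = x" unfolding eq[symmetric] using y xc by (simp add: m_assoc[symmetric])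
    then show "p \<in> (\<lambda>y. (y, y \<otimes> k)) ` V" using pyx mc yY V_def by auto
  qed
  then have "card W \<le> card ((\<lambda>y. (y, y \<otimes> k)) ` V)" by (intro card_mono) (use fV in auto)
  also have "\<dots> \<le> card V" by (rule card_image_le[OF fV])
  also have "card V \<le> card (\<Union>d\<in>D. Fb d)"
  proof (rule card_mono)
    show "finite (\<Union>d\<in>D. Fb d)"
    proof (intro finite_UN_I fD)
      fix d assume "d \<in> D"
      show "finite (Fb d)"
      proof (cases "Fb d = {}")
        case False
        then obtain y0 where y0: "y0 \<in> Fb d" by auto
        have "inj_on (\<lambda>y. y \<otimes> inv y0) (Fb d)"
          by (rule inj_onI) (use y0 in \<open>auto simp: Fb_def\<close>)
        moreover have "(\<lambda>y. y \<otimes> inv y0) ` Fb d \<subseteq> {g \<in> carrier G. act g c = c}"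
        proof clarify
          fix y assume "y \<in> Fb d"
          then have yc: "y \<in> carrier G" and ey: "act (inv y) c = d" by (auto simp: Fb_def)
          have y0c: "y0 \<in> carrier G" and e0: "act (inv y0) c = d" using y0 by (auto simp: Fb_def)
          have "act (y \<otimes> inv y0) c = act y (act (inv y) c)" using actm yc y0c e0 ey by simp
          also have "\<dots> = act (y \<otimes> inv y) c" using actm[of y "inv y" c] yc by simp
          also have "\<dots> = c" using yc act1 by simp
          finally show "y \<otimes> inv y0 \<in> carrier G \<and> act (y \<otimes> inv y0) c = c" using yc y0c by simp
        qed
        ultimately show ?thesis using stab[of c] finite_imageD finite_subset by metis
      qed simp
    qed
    show "V \<subseteq> (\<Union>d\<in>D. Fb d)"
    proof
      fix y assume "y \<in> V"
      then have "y \<in> Y" "m y (y \<otimes> k) = c" by (auto simp: V_def)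
      then show "y \<in> (\<Union>d\<in>D. Fb d)" using hD[of y] Ysub by (auto simp: Fb_def)
    qed
  qed
  also have "\<dots> \<le> (\<Sum>d\<in>D. card (Fb d))" by (rule card_UN_le[OF fD])
  also have "\<dots> \<le> (\<Sum>d\<in>D. Cst)"
  proof (rule sum_mono)
    fix d assume "d \<in> D"
    show "card (Fb d) \<le> Cst"
    proof (cases "Fb d = {}")
      case False
      then obtain y0 where y0: "y0 \<in> Fb d" by auto
      have inj: "inj_on (\<lambda>y. y \<otimes> inv y0) (Fb d)"
        by (rule inj_onI) (use y0 in \<open>auto simp: Fb_def\<close>)
      have sub: "(\<lambda>y. y \<otimes> inv y0) ` Fb d \<subseteq> {g \<in> carrier G. act g c = c}"
      proof clarify
        fix y assume "y \<in> Fb d"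
        then have yc: "y \<in> carrier G" and ey: "act (inv y) c = d" by (auto simp: Fb_def)
        have y0c: "y0 \<in> carrier G" and e0: "act (inv y0) c = d" using y0 by (auto simp: Fb_def)
        have "act (y \<otimes> inv y0) c = act y (act (inv y) c)" using actm yc y0c e0 ey by simp
        also have "\<dots> = act (y \<otimes> inv y) c" using actm[of y "inv y" c] yc by simp
        also have "\<dots> = c" using yc act1 by simp
        finally show "y \<otimes> inv y0 \<in> carrier G \<and> act (y \<otimes> inv y0) c = c" using yc y0c by simp
      qed
      have "card (Fb d) \<le> card {g \<in> carrier G. act g c = c}"
        by (rule card_inj_on_le[OF inj sub]) (use stab[of c] in simp)
      then show ?thesis using stab[of c] by linarith
    qed simp
  qed
  also have "\<dots> = Cst * card D" by simp
  finally show ?thesis unfolding W_def .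
qed


lemma word_length_one: "word_length G S \<one>\<^bsub>G\<^esub> = 0"
  unfolding word_length_def by (rule Least_eq_0) (rule exI[of _ "[]"], simp)

theorem theorem3:
  fixes G :: "('g, 'b) monoid_scheme" and S :: "'g set"
    and act :: "'g \<Rightarrow> 'x::metric_space \<Rightarrow> 'x" and m :: "'g \<Rightarrow> 'g \<Rightarrow> 'x"
  assumes "group G"
    and "finite S" and "S \<subseteq> carrier G" and "generate G S = carrier G"
    and "isometric_action G act"
    and "uniformly_bounded_stabilizers G act"
    and "centroid_map G S act m"
  shows "property_RD G S"
proof -
  note grp = assms(1)
  interpret group G by (rule grp)
  have act1: "\<And>x. act \<one>\<^bsub>G\<^esub> x = x"
    and actm: "\<And>g h x. g \<in> carrier G \<Longrightarrow> h \<in> carrier G \<Longrightarrow> act (g \<otimes>\<^bsub>G\<^esub> h) x = act g (act h x)"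
    using assms(5) unfolding isometric_action_def by auto
  obtain Cst :: nat where stab: "\<And>x. finite {g \<in> carrier G. act g x = x} \<and> card {g \<in> carrier G. act g x = x} \<le> Cst"
    using assms(6) unfolding uniformly_bounded_stabilizers_def by blast
  obtain P :: "real poly" where
    c1: "\<And>r h. h\<in>carrier G \<Longrightarrow> card_le ((\<lambda>g. m g h) ` ball_G G S r) (poly P (real r))" and
    c2: "\<And>r g. g\<in>ball_G G S r \<Longrightarrow> card_le ((\<lambda>h. m g h) ` carrier G) (poly P (real r))" and
    c3: "\<And>r h. h\<in>carrier G \<Longrightarrow>
           card_le ((\<lambda>g. act (inv\<^bsub>G\<^esub> g) (m g (g \<otimes>\<^bsub>G\<^esub> h))) ` ball_G G S r) (poly P (real r))"
    using assms(7) unfolding centroid_map_def by blast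
  have P1: "poly P (real r) \<ge> 1" for r
  proof -
    have "\<one>\<^bsub>G\<^esub> \<in> ball_G G S r" unfolding ball_G_def by (simp add: word_length_one)
    then have ne: "(\<lambda>g. m g \<one>\<^bsub>G\<^esub>) ` ball_G G S r \<noteq> {}" by auto
    have "card_le ((\<lambda>g. m g \<one>\<^bsub>G\<^esub>) ` ball_G G S r) (poly P (real r))" using c1 by simp
    then have "finite ((\<lambda>g. m g \<one>\<^bsub>G\<^esub>) ` ball_G G S r)" "real (card ((\<lambda>g. m g \<one>\<^bsub>G\<^esub>) ` ball_G G S r)) \<le> poly P (real r)"
      unfolding card_le_def by auto
    moreover have "card ((\<lambda>g. m g \<one>\<^bsub>G\<^esub>) ` ball_G G S r) \<ge> 1" using ne calculation(1)
      by (simp add: Suc_leI card_gt_0_iff)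
    ultimately show ?thesis by linarith
  qed
  define Q where "Q = smult (real Cst + 1) (P * P)"
  show ?thesis unfolding property_RD_def
  proof (intro exI[of _ Q] ballI)
    fix f assume f: "f \<in> group_algebra G"
    define n where "n = length_fun G S f"
    define Y where "Y = {x. f x \<noteq> 0}"
    define Pn where "Pn = poly P (real n)"
    have fY: "finite Y" and Ysub: "Y \<subseteq> carrier G" using f unfolding group_algebra_def Y_def by auto
    have Yball: "Y \<subseteq> ball_G G S n"
    proof
      fix y assume y: "y \<in> Y"
      then have "Y \<noteq> {}" by auto
      then have "word_length G S y \<le> n" unfolding n_def length_fun_def Y_def[symmetric]
        using y fY by simp
      then show "y \<in> ball_G G S n" using y Ysub unfolding ball_G_def by auto
    qed
    have Pn1: "Pn \<ge> 1" unfolding Pn_def by (rule P1)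
    define K where "K = sqrt (real Cst * Pn) * Pn"
    have K0: "K \<ge> 0" unfolding K_def using Pn1 by simp
    define Nf where "Nf = l2_norm G f"
    have Nf: "Nf = L2_set (\<lambda>y. cmod (f y)) Y"
    proof -
      have "infsum (\<lambda>x. (cmod (f x))\<^sup>2) (carrier G) = infsum (\<lambda>x. (cmod (f x))\<^sup>2) Y"
        by (rule infsum_cong_neutral) (use Ysub in \<open>auto simp: Y_def\<close>)
      then show ?thesis unfolding Nf_def l2_norm_def L2_set_def using fY by simp
    qed
    have Nf0: "Nf \<ge> 0" unfolding Nf by (rule L2_set_nonneg)
    have key: "l2_norm G (convolution G f \<xi>) \<le> K * Nf * l2_norm G \<xi>" if xi: "\<xi> \<in> l2 G" for \<xi>
    proof -
      define Nx where "Nx = l2_norm G \<xi>"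
      define a where "a y = cmod (f y)" for y
      define b where "b k = cmod (\<xi> k)" for k
      define e where "e x = cmod (convolution G f \<xi> x)" for x
      define kk where "kk y x = inv\<^bsub>G\<^esub> y \<otimes>\<^bsub>G\<^esub> x" for y x
      have summ: "(\<lambda>x. (cmod (\<xi> x))\<^sup>2) summable_on carrier G" using xi unfolding l2_def by simp
      have Nx0: "Nx \<ge> 0" unfolding Nx_def l2_norm_def
        by (simp add: infsum_nonneg)
      have e0: "e x \<ge> 0" for x unfolding e_def by simp
      have e_le: "e x \<le> (\<Sum>y\<in>Y. a y * b (kk y x))" for x
      proof -
        have "e x = cmod (\<Sum>y\<in>Y. f y * \<xi> (kk y x))"
          unfolding e_def convolution_def Y_def kk_def ..
        also have "\<dots> \<le> (\<Sum>y\<in>Y. cmod (f y * \<xi> (kk y x)))" by (rule norm_sum)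
        also have "\<dots> = (\<Sum>y\<in>Y. a y * b (kk y x))" unfolding a_def b_def by (simp add: norm_mult)
        finally show ?thesis .
      qed
      have fin: "(\<Sum>x\<in>F. (e x)\<^sup>2) \<le> (K * Nf * Nx)\<^sup>2" if fF: "finite F" and Fsub: "F \<subseteq> carrier G" for F
      proof -
        define L where "L = L2_set e F"
        define K' where "K' = (\<lambda>p. kk (fst p) (snd p)) ` (Y \<times> F)"
        have L0: "L \<ge> 0" unfolding L_def by (rule L2_set_nonneg)
        have sqL: "(\<Sum>x\<in>F. (e x)\<^sup>2) = L\<^sup>2" unfolding L_def L2_set_def
          by (simp add: sum_nonneg)
        have cA: "real (card (m y ` F)) \<le> Pn" if y: "y \<in> Y" for y
        proof -
          have "card_le ((\<lambda>h. m y h) ` carrier G) Pn" unfolding Pn_def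
            by (rule c2) (use y Yball in auto)
          then have fi: "finite (m y ` carrier G)" and le: "real (card (m y ` carrier G)) \<le> Pn"
            unfolding card_le_def by auto
          have "card (m y ` F) \<le> card (m y ` carrier G)" by (rule card_mono[OF fi]) (use Fsub in auto)
          then show ?thesis using le by linarith
        qed
        have cE: "real (card ((\<lambda>y. m y x) ` Y)) \<le> Pn" if x: "x \<in> F" for x
        proof -
          have "card_le ((\<lambda>g. m g x) ` ball_G G S n) Pn" unfolding Pn_def
            by (rule c1) (use x Fsub in auto)
          then have fi: "finite ((\<lambda>g. m g x) ` ball_G G S n)" and le: "real (card ((\<lambda>g. m g x) ` ball_G G S n)) \<le> Pn"
            unfolding card_le_def by auto
          have "card ((\<lambda>y. m y x) ` Y) \<le> card ((\<lambda>g. m g x) ` ball_G G S n)"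
            by (rule card_mono[OF fi]) (use Yball in auto)
          then show ?thesis using le by linarith
        qed
        have cB: "real (card {p\<in>Y\<times>F. m (fst p) (snd p) = c \<and> kk (fst p) (snd p) = k}) \<le> real Cst * Pn" for c k
        proof (cases "k \<in> carrier G")
          case True
          define D where "D = (\<lambda>g. act (inv\<^bsub>G\<^esub> g) (m g (g \<otimes>\<^bsub>G\<^esub> k))) ` ball_G G S n"
          have "card_le D Pn" unfolding D_def Pn_def by (rule c3[OF True])
          then have fD: "finite D" and cD: "real (card D) \<le> Pn" unfolding card_le_def by auto
          have "card {p\<in>Y\<times>F. m (fst p) (snd p) = c \<and> inv\<^bsub>G\<^esub> (fst p) \<otimes>\<^bsub>G\<^esub> snd p = k} \<le> Cst * card D"
            by (rule fibre_card[OF grp act1 actm stab Ysub Fsub fY True fD])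
               (use Yball in \<open>auto simp: D_def\<close>)
          then have "real (card {p\<in>Y\<times>F. m (fst p) (snd p) = c \<and> kk (fst p) (snd p) = k}) \<le> real Cst * real (card D)"
            unfolding kk_def of_nat_mult[symmetric] of_nat_le_iff .
          also have "\<dots> \<le> real Cst * Pn" using cD by (simp add: mult_left_mono)
          finally show ?thesis .
        next
          case False
          have E: "{p\<in>Y\<times>F. m (fst p) (snd p) = c \<and> kk (fst p) (snd p) = k} = {}"
            using False Ysub Fsub unfolding kk_def by auto
          have "real (card {p\<in>Y\<times>F. m (fst p) (snd p) = c \<and> kk (fst p) (snd p) = k}) = 0"
            by (subst E) simp
          then show ?thesis using Pn1 by simp
        qed
        have "(\<Sum>x\<in>F. (e x)\<^sup>2) \<le> (\<Sum>x\<in>F. e x * (\<Sum>y\<in>Y. a y * b (kk y x)))"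
          unfolding power2_eq_square by (rule sum_mono) (use e_le e0 in \<open>simp add: mult_left_mono\<close>)
        also have "\<dots> = (\<Sum>x\<in>F. \<Sum>y\<in>Y. a y * e x * b (kk y x))"
          by (simp add: sum_distrib_left mult_ac)
        also have "\<dots> = (\<Sum>y\<in>Y. \<Sum>x\<in>F. a y * e x * b (kk y x))" by (rule sum.swap)
        also have "\<dots> = (\<Sum>p\<in>Y\<times>F. \<bar>a (fst p)\<bar> * \<bar>e (snd p)\<bar> * \<bar>b (kk (fst p) (snd p))\<bar>)"
          by (simp add: sum.cartesian_product case_prod_beta a_def b_def e_def)
        also have "\<dots> \<le> sqrt (real Cst * Pn) * Pn * L2_set a Y * L2_set e F * L2_set b K'"
          unfolding K'_def
          by (rule core[OF fY fF _ _ cA cE cB]) (use Pn1 in auto)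
        also have "\<dots> = sqrt (real Cst * Pn) * Pn * Nf * L * L2_set b K'"
          unfolding Nf L_def a_def ..
        also have "\<dots> \<le> sqrt (real Cst * Pn) * Pn * Nf * L * Nx"
        proof (rule mult_left_mono)
          have "L2_set b K' = sqrt (\<Sum>k\<in>K'. (cmod (\<xi> k))\<^sup>2)" unfolding L2_set_def b_def by simp
          also have "\<dots> \<le> sqrt (infsum (\<lambda>x. (cmod (\<xi> x))\<^sup>2) (carrier G))"
          proof (rule real_sqrt_le_mono, rule finite_sum_le_infsum[OF summ])
            show "finite K'" unfolding K'_def using fY fF by simp
            show "K' \<subseteq> carrier G" unfolding K'_def kk_def using Ysub Fsub by (auto intro!: m_closed inv_closed)
          qed simp
          finally show "L2_set b K' \<le> Nx" unfolding Nx_def l2_norm_def .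
          show "0 \<le> sqrt (real Cst * Pn) * Pn * Nf * L" using Pn1 Nf0 L0 by simp
        qed
        finally have "L\<^sup>2 \<le> (K * Nf * Nx) * L" unfolding sqL K_def by (simp add: mult_ac)
        then have LL: "L \<le> K * Nf * Nx"
        proof (cases "L = 0")
          case True then show ?thesis using K0 Nf0 Nx0 by simp
        next
          case False
          with L0 have "L > 0" by simp
          moreover assume "L\<^sup>2 \<le> (K * Nf * Nx) * L"
          ultimately show ?thesis unfolding power2_eq_square by simp
        qed
        show ?thesis unfolding sqL by (rule power_mono[OF LL L0])
      qed
      have inf: "infsum (\<lambda>x. (e x)\<^sup>2) (carrier G) \<le> (K * Nf * Nx)\<^sup>2"
      proof (cases "(\<lambda>x. (e x)\<^sup>2) summable_on carrier G")
        case True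
        show ?thesis by (rule infsum_le_finite_sums[OF True]) (use fin in auto)
      next
        case False
        then show ?thesis by (simp add: infsum_not_exists)
      qed
      have "l2_norm G (convolution G f \<xi>) = sqrt (infsum (\<lambda>x. (e x)\<^sup>2) (carrier G))"
        unfolding l2_norm_def e_def ..
      also have "\<dots> \<le> sqrt ((K * Nf * Nx)\<^sup>2)" by (rule real_sqrt_le_mono[OF inf])
      also have "\<dots> = K * Nf * Nx" using K0 Nf0 Nx0 by simp
      finally show ?thesis unfolding Nx_def .
    qed
    define SS where "SS = {l2_norm G (convolution G f \<xi>) | \<xi>. \<xi> \<in> l2 G \<and> l2_norm G \<xi> \<le> 1}"
    have "(\<lambda>_. 0) \<in> l2 G" unfolding l2_def by simp
    then have SSne: "SS \<noteq> {}" unfolding SS_def by (auto simp: l2_norm_def)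
    have "op_norm G f \<le> K * Nf"
      unfolding op_norm_def SS_def[symmetric]
    proof (rule cSup_least[OF SSne])
      fix z assume "z \<in> SS"
      then obtain \<xi> where z: "z = l2_norm G (convolution G f \<xi>)" and xi: "\<xi> \<in> l2 G" "l2_norm G \<xi> \<le> 1"
        unfolding SS_def by auto
      have "z \<le> K * Nf * l2_norm G \<xi>" using key[OF xi(1)] z by simp
      also have "\<dots> \<le> K * Nf * 1" by (rule mult_left_mono[OF xi(2)]) (use K0 Nf0 in simp)
      finally show "z \<le> K * Nf" by simp
    qed
    also have "K * Nf \<le> poly Q (real (length_fun G S f)) * l2_norm G f"
    proof -
      have "sqrt (real Cst * Pn) \<le> (real Cst + 1) * Pn"
      proof -
        have "real Cst * Pn \<le> ((real Cst + 1) * Pn)\<^sup>2"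
        proof -
          have "real Cst * Pn \<le> (real Cst + 1) * Pn" using Pn1 by simp
          also have "\<dots> \<le> ((real Cst + 1) * Pn) * ((real Cst + 1) * Pn)"
            using Pn1 mult_mono[of 1 "real Cst + 1" 1 Pn] by (intro mult_le_cancel_left1[THEN iffD2]) auto
          finally show ?thesis by (simp add: power2_eq_square)
        qed
        then have "sqrt (real Cst * Pn) \<le> sqrt (((real Cst + 1) * Pn)\<^sup>2)" by (rule real_sqrt_le_mono)
        also have "\<dots> = (real Cst + 1) * Pn" using Pn1 by simp
        finally show ?thesis .
      qed
      then have "K \<le> poly Q (real n)" unfolding K_def Q_def Pn_def using Pn1 Pn_def
        by (simp add: mult_right_mono mult.assoc)
      then show ?thesis using Nf0 n_def Nf_def by (simp add: mult_right_mono)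
    qed
    finally show "op_norm G f \<le> poly Q (real (length_fun G S f)) * l2_norm G f" .
  qed
qed

end
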